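(* Let $G=(V,E)$ be a network with two sources $s_1,s_2$ and $n$ terminals $t_1,\dots,t_n$, such that for every $i\in\{1,2\}$ and $j\in\{1,\dots,n\}$ the max-flow from $s_i$ to $t_j$ is at least $1$ (i.e., there is a directed path from $s_i$ to $t_j$). Then there exists a linear network code (an assignment of coding vectors to all edges) over $\mathbb{F}=GF(2^m)$ such that every terminal $t_j$ can recover $X_1+X_2$ from the symbols on its incoming edges.
   Context: A network is a finite directed acyclic graph $G=(V,E)$ (parallel edges allowed) in which every edge has unit capacity and carries one symbol of a finite field $\mathbb{F}$ per use. Sources are vertices with no incoming edges; source $s_i$ holds $X_i\in\mathbb{F}$, the $X_i$ independent and uniformly distributed (unit entropy). Terminals are vertices with no outgoing edges. In a linear network code the symbol on an edge leaving a non-source vertex is an $\mathbb{F}$-linear combination of the symbols on the edges entering its tail, and the symbol on an edge leaving a source is a multiple of the source symbol. *)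

theory Defs
  imports Main
begin

text \<open>A network: finite vertex set V, finite set E of edge identifiers
  (so parallel edges are allowed), each edge e going from tail e to head e.
  Every edge has unit capacity and carries one field symbol.\<close>

definition arcs :: "'e set \<Rightarrow> ('e \<Rightarrow> 'v) \<Rightarrow> ('e \<Rightarrow> 'v) \<Rightarrow> ('v \<times> 'v) set" where
  "arcs E tail head = {(tail e, head e) | e. e \<in> E}"

definition in_edges :: "'e set \<Rightarrow> ('e \<Rightarrow> 'v) \<Rightarrow> 'v \<Rightarrow> 'e set" where
  "in_edges E head v = {e \<in> E. head e = v}"

definition out_edges :: "'e set \<Rightarrow> ('e \<Rightarrow> 'v) \<Rightarrow> 'v \<Rightarrow> 'e set" where
  "out_edges E tail v = {e \<in> E. tail e = v}"

definition is_network :: "'v set \<Rightarrow> 'e set \<Rightarrow> ('e \<Rightarrow> 'v) \<Rightarrow> ('e \<Rightarrow> 'v) \<Rightarrow> bool" where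
  "is_network V E tail head \<longleftrightarrow> finite V \<and> finite E \<and>
     (\<forall>e\<in>E. tail e \<in> V \<and> head e \<in> V) \<and> acyclic (arcs E tail head)"

definition sources :: "'v set \<Rightarrow> 'e set \<Rightarrow> ('e \<Rightarrow> 'v) \<Rightarrow> 'v set" where
  "sources V E head = {v \<in> V. in_edges E head v = {}}"

definition terminals :: "'v set \<Rightarrow> 'e set \<Rightarrow> ('e \<Rightarrow> 'v) \<Rightarrow> 'v set" where
  "terminals V E tail = {v \<in> V. out_edges E tail v = {}}"

text \<open>A linear network code for two sources s1 (holding X1) and s2 (holding X2),
  given by its global coding vectors g e = (a, b): edge e carries a*X1 + b*X2.\<close>
definition is_linear_code2 ::
  "'v set \<Rightarrow> 'e set \<Rightarrow> ('e \<Rightarrow> 'v) \<Rightarrow> ('e \<Rightarrow> 'v) \<Rightarrow> 'v \<Rightarrow> 'v \<Rightarrow> ('e \<Rightarrow> 'f::field \<times> 'f) \<Rightarrow> bool" where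
  "is_linear_code2 V E tail head s1 s2 g \<longleftrightarrow>
     (\<forall>e\<in>E.
        (tail e = s1 \<longrightarrow> (\<exists>k. g e = (k, 0))) \<and>
        (tail e = s2 \<longrightarrow> (\<exists>k. g e = (0, k))) \<and>
        (tail e \<notin> sources V E head \<longrightarrow>
           (\<exists>\<beta> :: 'e \<Rightarrow> 'f.
              g e = ((\<Sum>e'\<in>in_edges E head (tail e). \<beta> e' * fst (g e')),
                     (\<Sum>e'\<in>in_edges E head (tail e). \<beta> e' * snd (g e'))))))"

definition edge_symbol :: "('e \<Rightarrow> 'f::field \<times> 'f) \<Rightarrow> 'f \<Rightarrow> 'f \<Rightarrow> 'e \<Rightarrow> 'f" where
  "edge_symbol g x1 x2 e = fst (g e) * x1 + snd (g e) * x2"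

definition recovers_sum :: "'e set \<Rightarrow> ('e \<Rightarrow> 'v) \<Rightarrow> ('e \<Rightarrow> 'f::field \<times> 'f) \<Rightarrow> 'v \<Rightarrow> bool" where
  "recovers_sum E head g t \<longleftrightarrow>
     (\<exists>D :: ('e \<Rightarrow> 'f) \<Rightarrow> 'f. \<forall>x1 x2.
        D (\<lambda>e. if e \<in> in_edges E head t then edge_symbol g x1 x2 e else 0) = x1 + x2)"

end

theory Submission
  imports Defs
begin

lemma reach_iff:
  assumes "v \<noteq> s"
  shows "(s,v) \<in> (arcs E tail head)\<^sup>* \<longleftrightarrow> (\<exists>e\<in>in_edges E head v. (s, tail e) \<in> (arcs E tail head)\<^sup>*)"
proof
  assume "(s,v) \<in> (arcs E tail head)\<^sup>*"
  then show "\<exists>e\<in>in_edges E head v. (s, tail e) \<in> (arcs E tail head)\<^sup>*"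
  proof (cases rule: rtranclE)
    case base then show ?thesis using assms by simp
  next
    case (step u)
    then obtain e where "e \<in> E" "tail e = u" "head e = v" unfolding arcs_def by blast
    then show ?thesis using step unfolding in_edges_def by auto
  qed
next
  assume "\<exists>e\<in>in_edges E head v. (s, tail e) \<in> (arcs E tail head)\<^sup>*"
  then obtain e where e: "e \<in> E" "head e = v" "(s, tail e) \<in> (arcs E tail head)\<^sup>*"
    unfolding in_edges_def by blast
  have "(tail e, head e) \<in> arcs E tail head" using e unfolding arcs_def by blast
  with e show "(s,v) \<in> (arcs E tail head)\<^sup>*" by (metis rtrancl_into_rtrancl)
qed

lemma sum_ind:
  assumes "finite A" "a \<in> A"
  shows "(\<Sum>e\<in>A. (if e = a then 1 else 0) * f e) = (f a :: 'f::field)"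
proof -
  have "(\<Sum>e\<in>A. (if e = a then 1 else 0) * f e) = (\<Sum>e\<in>A. if e = a then f e else 0)"
    by (rule sum.cong) auto
  also have "\<dots> = f a" using assms by (simp add: sum.delta)
  finally show ?thesis .
qed

lemma combo:
  assumes "finite A"
  shows "\<exists>\<beta> :: 'e \<Rightarrow> 'f::field.
     ((of_bool (\<exists>e\<in>A. P e) :: 'f), (of_bool (\<exists>e\<in>A. Q e) :: 'f)) =
     ((\<Sum>e\<in>A. \<beta> e * of_bool (P e)), (\<Sum>e\<in>A. \<beta> e * of_bool (Q e)))"
proof -
  consider (both) c where "c \<in> A" "P c" "Q c"
    | (two) c d where "c \<in> A" "d \<in> A" "P c" "Q d" "\<not> Q c" "\<not> P d"
    | (onlyP) c where "c \<in> A" "P c" "\<forall>e\<in>A. \<not> Q e"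
    | (onlyQ) d where "d \<in> A" "Q d" "\<forall>e\<in>A. \<not> P e"
    | (none) "\<forall>e\<in>A. \<not> P e" "\<forall>e\<in>A. \<not> Q e"
    by blast
  then show ?thesis
  proof cases
    case both
    show ?thesis
      by (rule exI[of _ "\<lambda>e. if e = c then 1 else 0"])
         (simp add: sum_ind[OF assms both(1)] both, use both in blast)
  next
    case two
    have cd: "c \<noteq> d" using two by auto
    let ?b = "\<lambda>e. (if e = c then 1 else 0) + (if e = d then 1 else (0::'f))"
    have s: "(\<Sum>e\<in>A. ?b e * f e) = f c + f d" for f :: "'e \<Rightarrow> 'f"
      by (simp add: distrib_right sum.distrib sum_ind[OF assms two(1)] sum_ind[OF assms two(2)])
    show ?thesis
      by (rule exI[of _ ?b]) (simp only: s, use two in auto)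
  next
    case onlyP
    show ?thesis
      by (rule exI[of _ "\<lambda>e. if e = c then 1 else 0"])
         (simp add: sum_ind[OF assms onlyP(1)] onlyP, use onlyP in auto)
  next
    case onlyQ
    show ?thesis
      by (rule exI[of _ "\<lambda>e. if e = d then 1 else 0"])
         (simp add: sum_ind[OF assms onlyQ(1)] onlyQ, use onlyQ in auto)
  next
    case none
    show ?thesis by (rule exI[of _ "\<lambda>e. 0"]) (use none in auto)
  qed
qed

theorem theorem1:
  fixes V :: "'v set" and E :: "'e set" and tail head :: "'e \<Rightarrow> 'v"
    and s1 s2 :: 'v and t :: "nat \<Rightarrow> 'v" and n m :: nat
  assumes "is_network V E tail head"
    and "s1 \<noteq> s2"
    and "sources V E head = {s1, s2}"
    and "terminals V E tail = t ` {1..n}"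
    and "inj_on t {1..n}"
    and "\<forall>s\<in>{s1, s2}. \<forall>j\<in>{1..n}. (s, t j) \<in> (arcs E tail head)\<^sup>+"
    and "card (UNIV :: ('f::{field,finite}) set) = 2 ^ m"
  shows "\<exists>g :: 'e \<Rightarrow> 'f \<times> 'f. is_linear_code2 V E tail head s1 s2 g \<and>
           (\<forall>j\<in>{1..n}. recovers_sum E head g (t j))"
proof -
  let ?R = "arcs E tail head"
  define r :: "'v \<Rightarrow> 'f \<times> 'f" where
    "r v = (of_bool ((s1,v) \<in> ?R\<^sup>*), of_bool ((s2,v) \<in> ?R\<^sup>*))" for v
  define g where "g e = r (tail e)" for e
  have finE: "finite E" using assms(1) unfolding is_network_def by blast
  have finI: "finite (in_edges E head v)" for v using finE unfolding in_edges_def by simp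
  have acyc: "acyclic ?R" using assms(1) unfolding is_network_def by blast
  have src: "in_edges E head s = {}" if "s \<in> {s1,s2}" for s
    using assms(3) that unfolding sources_def by blast
  have noreach: "(s,s') \<notin> ?R\<^sup>*" if "s \<in> {s1,s2}" "s' \<in> {s1,s2}" "s \<noteq> s'" for s s'
    using reach_iff[of s' s E tail head] that src[OF that(2)] by auto
  have key: "\<exists>\<beta> :: 'e \<Rightarrow> 'f. r v = ((\<Sum>e'\<in>in_edges E head v. \<beta> e' * fst (g e')),
                     (\<Sum>e'\<in>in_edges E head v. \<beta> e' * snd (g e')))"
    if "v \<noteq> s1" "v \<noteq> s2" for v
  proof -
    have "r v = (of_bool (\<exists>e\<in>in_edges E head v. (s1, tail e) \<in> ?R\<^sup>*),
                 of_bool (\<exists>e\<in>in_edges E head v. (s2, tail e) \<in> ?R\<^sup>*))"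
      unfolding r_def using reach_iff[of v s1 E tail head] reach_iff[of v s2 E tail head] that
      by simp
    then show ?thesis
      using combo[OF finI, of v "\<lambda>e. (s1, tail e) \<in> ?R\<^sup>*" "\<lambda>e. (s2, tail e) \<in> ?R\<^sup>*"]
      unfolding g_def r_def by simp
  qed
  have code: "is_linear_code2 V E tail head s1 s2 g"
    unfolding is_linear_code2_def
  proof (intro ballI conjI impI)
    fix e assume "e \<in> E" "tail e = s1"
    then show "\<exists>k. g e = (k, 0)" unfolding g_def r_def using noreach[of s2 s1] assms(2) by auto
  next
    fix e assume "e \<in> E" "tail e = s2"
    then show "\<exists>k. g e = (0, k)" unfolding g_def r_def using noreach[of s1 s2] assms(2) by auto
  next
    fix e assume "e \<in> E" "tail e \<notin> sources V E head"
    then have "tail e \<noteq> s1" "tail e \<noteq> s2" using assms(3) by auto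
    from key[OF this] show "\<exists>\<beta> :: 'e \<Rightarrow> 'f. g e = ((\<Sum>e'\<in>in_edges E head (tail e). \<beta> e' * fst (g e')),
                     (\<Sum>e'\<in>in_edges E head (tail e). \<beta> e' * snd (g e')))"
      unfolding g_def[of e] by simp
  qed
  have rec: "recovers_sum E head g (t j)" if j: "j \<in> {1..n}" for j
  proof -
    have tr: "(s, t j) \<in> ?R\<^sup>+" if "s \<in> {s1,s2}" for s using assms(6) j that by blast
    have ne: "t j \<noteq> s" if "s \<in> {s1,s2}" for s
      using tr[OF that] acyc unfolding acyclic_def by auto
    have rt: "r (t j) = (1,1)" unfolding r_def using tr[of s1] tr[of s2]
      by (auto dest: trancl_into_rtrancl)
    obtain \<beta> :: "'e \<Rightarrow> 'f" where b:
      "r (t j) = ((\<Sum>e'\<in>in_edges E head (t j). \<beta> e' * fst (g e')),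
                     (\<Sum>e'\<in>in_edges E head (t j). \<beta> e' * snd (g e')))"
      using key[of "t j"] ne by auto
    have b1: "(\<Sum>e'\<in>in_edges E head (t j). \<beta> e' * fst (g e')) = 1"
      and b2: "(\<Sum>e'\<in>in_edges E head (t j). \<beta> e' * snd (g e')) = 1" using b rt by auto
    show ?thesis unfolding recovers_sum_def
    proof (rule exI[of _ "\<lambda>f. \<Sum>e\<in>in_edges E head (t j). \<beta> e * f e"], intro allI)
      fix x1 x2 :: 'f
      have "(\<Sum>e\<in>in_edges E head (t j). \<beta> e * (if e \<in> in_edges E head (t j) then edge_symbol g x1 x2 e else 0))
          = (\<Sum>e\<in>in_edges E head (t j). (\<beta> e * fst (g e)) * x1 + (\<beta> e * snd (g e)) * x2)"
        by (rule sum.cong) (auto simp: edge_symbol_def algebra_simps)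
      also have "\<dots> = x1 + x2"
        by (simp add: sum.distrib sum_distrib_right[symmetric] b1 b2)
      finally show "(\<Sum>e\<in>in_edges E head (t j). \<beta> e * (if e \<in> in_edges E head (t j) then edge_symbol g x1 x2 e else 0)) = x1 + x2" .
    qed
  qed
  show ?thesis using code rec by blast
qed

end
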